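(* Let $d\ge 2$ and $1\le r<d$. Let $h(x)=\mathrm{ReLU}(\Gamma^*W^*x+\beta^* )$ be a one-layer ReLU network, where $x\in\mathbb{R}^d$, $\Gamma^*\in\mathbb{R}^{d\times d}$ is diagonal, $\beta^*\in\mathbb{R}^d$, and $W^*\in\mathbb{R}^{d\times d}$ has rank $r$. Consider the four-layer network $$f(x)=\mathrm{ReLU}\Big(\Gamma_4W_4\,\mathrm{ReLU}\big(\Gamma_3W_3\,\mathrm{ReLU}(\Gamma_2W_2\,\mathrm{ReLU}(\Gamma_1W_1x+\beta_1)+\beta_2)+\beta_3\big)+\beta_4\Big),$$ with layer widths $d\to dr\to r\to dr\to d$. Concretely: - $W_1\in\mathbb{R}^{dr\times d}$, $W_2\in\mathbb{R}^{r\times dr}$, $W_3\in\mathbb{R}^{dr\times r}$, $W_4\in\mathbb{R}^{d\times dr}$ are random and frozen; - $\Gamma_1,\Gamma_2,\Gamma_3,\Gamma_4$ are diagonal of sizes $dr,r,dr,d$ respectively; - $\beta_1,\beta_2,\beta_3,\beta_4$ are vectors of the corresponding sizes; - the $\Gamma_i,\beta_i$ are tunable. Then, with probability $1$ over the draw of $W_1,\dots,W_4$, there exist $\Gamma_1,\dots,\Gamma_4,\beta_1,\dots,\beta_4$ such that $f(x)=h(x)$ for all $x\in\mathbb{R}^d$ with $\|x\|_2\le1$.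
   Context: $\mathrm{ReLU}(t)=\max(t,0)$ is applied entrywise. "Random" weight matrices have independent, identically distributed entries drawn from an arbitrary continuous and bounded distribution, independently across matrices. The diagonal matrices $\Gamma_i$ and vectors $\beta_i$ are the (tunable) scale and shift parameters of normalization layers. *)

theory Defs
  imports "HOL-Analysis.Analysis" "HOL-Probability.Probability"
begin

definition relu :: "real \<Rightarrow> real" where
  "relu t = max t 0"

definition vrelu :: "real^'n \<Rightarrow> real^'n" where
  "vrelu v = (\<chi> i. relu (v $ i))"

definition is_diag :: "real^'n^'n \<Rightarrow> bool" where
  "is_diag G \<longleftrightarrow> (\<forall>i j. i \<noteq> j \<longrightarrow> G $ i $ j = 0)"

definition layer :: "real^'m^'m \<Rightarrow> real^'n^'m \<Rightarrow> real^'m \<Rightarrow> real^'n \<Rightarrow> real^'m" where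
  "layer G W b x = vrelu ((G ** W) *v x + b)"

text \<open>Index type of all frozen random weights: entries of
  W1 (dr x d), W2 (r x dr), W3 (dr x r), W4 (d x dr).\<close>
type_synonym ('d,'r) widx =
  "(('d \<times> 'r) \<times> 'd) + ('r \<times> ('d \<times> 'r)) + ((('d \<times> 'r) \<times> 'r) + ('d \<times> ('d \<times> 'r)))"

definition W1 :: "(('d::finite,'r::finite) widx \<Rightarrow> real) \<Rightarrow> real^'d^('d \<times> 'r)" where
  "W1 \<omega> = (\<chi> i j. \<omega> (Inl (i, j)))"
definition W2 :: "(('d::finite,'r::finite) widx \<Rightarrow> real) \<Rightarrow> real^('d \<times> 'r)^'r" where
  "W2 \<omega> = (\<chi> i j. \<omega> (Inr (Inl (i, j))))"
definition W3 :: "(('d::finite,'r::finite) widx \<Rightarrow> real) \<Rightarrow> real^'r^('d \<times> 'r)" where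
  "W3 \<omega> = (\<chi> i j. \<omega> (Inr (Inr (Inl (i, j)))))"
definition W4 :: "(('d::finite,'r::finite) widx \<Rightarrow> real) \<Rightarrow> real^('d \<times> 'r)^'d" where
  "W4 \<omega> = (\<chi> i j. \<omega> (Inr (Inr (Inr (i, j)))))"

definition cont_bounded_distr :: "real measure \<Rightarrow> bool" where
  "cont_bounded_distr \<mu> \<longleftrightarrow> prob_space \<mu> \<and> sets \<mu> = sets borel \<and>
     absolutely_continuous lborel \<mu> \<and> (\<exists>B. AE t in \<mu>. \<bar>t\<bar> \<le> B)"

end

theory Submission imports Defs begin

definition diagm :: "real^'n \<Rightarrow> real^'n^'n" where
  "diagm g = (\<chi> i j. if i = j then g $ i else 0)"

lemma is_diag_diagm: "is_diag (diagm g)"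
  by (simp add: is_diag_def diagm_def)

lemma diagm_mult: "(diagm g ** V) $ k $ b = g $ k * V $ k $ b"
proof -
  have e: "\<And>P a c. (if P then a else 0) * (c::real) = (if P then a * c else 0)" by simp
  have "(diagm g ** V) $ k $ b = (\<Sum>j\<in>UNIV. (if k = j then g $ k else 0) * V $ j $ b)"
    by (simp add: diagm_def matrix_matrix_mult_def)
  then show ?thesis by (simp only: e sum.delta) simp
qed

lemma factor_rank:
  fixes Gs Ws :: "real^'d^'d"
  assumes "rank Ws = CARD('r::finite)"
  shows "\<exists>(A::real^'r^'d) (B::real^'d^'r). Gs ** Ws = A ** B"
proof -
  have d: "dim (UNIV::(real^'r) set) = dim (range ((*v) Ws))"
    using assms by (simp add: rank_dim_range)
  have sub: "subspace (range ((*v) Ws))"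
    by (simp add: linear_subspace_image matrix_vector_mul_linear)
  obtain f :: "real^'r \<Rightarrow> real^'d" where f: "linear f" "f ` UNIV = range ((*v) Ws)"
    using subspace_isomorphism[OF subspace_UNIV sub d] by blast
  obtain g :: "real^'d \<Rightarrow> real^'r" where g: "linear g" "\<forall>v\<in>f ` UNIV. f (g v) = v"
    using linear_exists_right_inverse_on[OF f(1) subspace_UNIV] by blast
  have lg: "linear (\<lambda>x. g (Ws *v x))"
    using g(1) by (intro linear_compose[unfolded o_def, OF matrix_vector_mul_linear]) 
  have "Gs ** Ws = (Gs ** matrix f) ** matrix (\<lambda>x. g (Ws *v x))"
  proof (subst matrix_eq, intro allI)
    fix x
    have "Ws *v x \<in> f ` UNIV" using f(2) by auto
    then have "f (g (Ws *v x)) = Ws *v x" using g(2) by blast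
    then show "(Gs ** Ws) *v x = (Gs ** matrix f ** matrix (\<lambda>x. g (Ws *v x))) *v x"
      by (simp add: matrix_vector_mul_assoc[symmetric] matrix_vector_mul(2)[OF f(1)]
           matrix_vector_mul(2)[OF lg])
  qed
  then show ?thesis by blast
qed

lemma solve_diag:
  fixes U :: "real^'K^'a" and V :: "real^'b^'K" and C :: "real^'b^'a"
    and fa :: "'K \<Rightarrow> 'a" and fb :: "'K \<Rightarrow> 'b"
  assumes "det ((\<chi> k p. U $ fa p $ k * V $ k $ fb p) :: real^'K^'K) \<noteq> 0"
    and sur: "\<And>a b. \<exists>p. fa p = a \<and> fb p = b"
  shows "\<exists>g. U ** (diagm g ** V) = C"
proof -
  define M where "M = ((\<chi> k p. U $ fa p $ k * V $ k $ fb p) :: real^'K^'K)"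
  have "invertible M" using assms(1) by (simp add: M_def invertible_det_nz)
  then obtain M' where M': "M' ** M = mat 1" unfolding invertible_def by blast
  define t where "t = (\<chi> p. C $ fa p $ fb p)"
  define g where "g = t v* M'"
  have gt: "g v* M = t" by (simp add: g_def vector_matrix_mul_assoc M')
  have "U ** (diagm g ** V) = C"
  proof (subst vec_eq_iff, intro allI, subst vec_eq_iff, intro allI)
    fix a b
    obtain p where p: "fa p = a" "fb p = b" using sur by blast
    have "(g v* M) $ p = t $ p" using gt by simp
    then have "(\<Sum>i\<in>UNIV. g $ i * (U $ a $ i * V $ i $ b)) = C $ a $ b"
      by (simp add: vector_matrix_mult_def M_def t_def p)
    moreover have "(\<Sum>k\<in>UNIV. U $ a $ k * V $ k $ b * g $ k) = (\<Sum>i\<in>UNIV. g $ i * (U $ a $ i * V $ i $ b))"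
      by (intro sum.cong) (simp_all add: mult_ac)
    moreover have "(U ** X) $ a $ b = (\<Sum>k\<in>UNIV. U $ a $ k * X $ k $ b)" for X :: "real^'b^'K"
      by (simp add: matrix_matrix_mult_def)
    ultimately show "(U ** (diagm g ** V)) $ a $ b = C $ a $ b"
      by (simp add: diagm_mult mult_ac)
  qed
  then show ?thesis by blast
qed

lemma bias_exists:
  fixes M :: "real^'n^'m"
  assumes "bounded S"
  shows "\<exists>b. \<forall>x\<in>S. \<forall>k. 0 \<le> (M *v x + b) $ k"
proof -
  have "bounded ((*v) M ` S)"
    using assms by (intro bounded_linear_image) (simp_all add: matrix_vector_mul_bounded_linear)
  then obtain B where B: "\<And>y. y \<in> (*v) M ` S \<Longrightarrow> norm y \<le> B" by (auto simp: bounded_iff)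
  show ?thesis
  proof (intro exI[of _ "\<chi> k. B"] ballI allI)
    fix x k assume "x \<in> S"
    then have "norm (M *v x) \<le> B" using B by blast
    moreover have "\<bar>(M *v x) $ k\<bar> \<le> norm (M *v x)" by (rule component_le_norm_cart)
    ultimately show "0 \<le> (M *v x + (\<chi> k. B)) $ k" by simp
  qed
qed

lemma bounded_affine_image:
  fixes M :: "real^'n^'m"
  assumes "bounded S"
  shows "bounded ((\<lambda>x. M *v x + b) ` S)"
proof -
  have "bounded ((*v) M ` S)"
    using assms by (intro bounded_linear_image) (simp_all add: matrix_vector_mul_bounded_linear)
  then have "bounded ((\<lambda>y. b + y) ` ((*v) M ` S))" by (rule bounded_translation)
  then show ?thesis by (simp add: image_image add.commute)
qed

lemma vrelu_nonneg: "(\<forall>k. 0 \<le> v $ k) \<Longrightarrow> vrelu v = v"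
  by (auto simp: vrelu_def relu_def vec_eq_iff max_def intro: order_antisym)


lemma is_diag_mat1: "is_diag (mat 1)"
  by (simp add: is_diag_def mat_def)

lemma det_poly:
  fixes q :: "'n::finite \<Rightarrow> 'n \<Rightarrow> real poly"
  shows "\<exists>P. \<forall>t. det ((\<chi> i j. poly (q i j) t) :: real^'n^'n) = poly P t"
proof
  let ?P = "\<Sum>p\<in>{p. p permutes (UNIV::'n set)}. smult (of_int (sign p)) (\<Prod>i\<in>UNIV. q i (p i))"
  show "\<forall>t. det ((\<chi> i j. poly (q i j) t) :: real^'n^'n) = poly ?P t"
    by (simp add: det_def poly_sum poly_prod)
qed

lemma det_upd_poly:
  fixes a b :: "'n::finite \<Rightarrow> 'n \<Rightarrow> 'e"
  shows "\<exists>P. \<forall>t. det ((\<chi> k p. (w(e:=t)) (a k p) * (w(e:=t)) (b k p)) :: real^'n^'n) = poly P t"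
proof -
  define cq where "cq x = (if x = e then [:0,1:] else [:w x:])" for x
  have c: "(w(e:=t)) x = poly (cq x) t" for x t by (simp add: cq_def)
  obtain P where P: "\<forall>t. det ((\<chi> k p. poly (cq (a k p) * cq (b k p)) t) :: real^'n^'n) = poly P t"
    using det_poly[of "\<lambda>k p. cq (a k p) * cq (b k p)"] by auto
  have eq: "((\<chi> k p. (w(e:=t)) (a k p) * (w(e:=t)) (b k p)) :: real^'n^'n) = (\<chi> k p. poly (cq (a k p) * cq (b k p)) t)" for t
    by (simp only: c poly_mult)
  show ?thesis
  proof (intro exI allI)
    fix t show "det ((\<chi> k p. (w(e:=t)) (a k p) * (w(e:=t)) (b k p)) :: real^'n^'n) = poly P t"
      by (simp only: eq P[rule_format])
  qed
qed

lemma null_poly: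
  fixes \<mu> :: "real measure" and I :: "'i set"
  assumes sf: "sigma_finite_measure \<mu>" and sp: "space \<mu> = UNIV"
    and fin_null: "\<And>R. finite R \<Longrightarrow> R \<in> null_sets \<mu>"
    and "finite I"
  shows "f \<in> borel_measurable (PiM I (\<lambda>_. \<mu>)) \<Longrightarrow> (\<forall>x j. \<exists>p. \<forall>t. f (x(j:=t)) = poly p t)
    \<Longrightarrow> z \<in> space (PiM I (\<lambda>_. \<mu>)) \<Longrightarrow> f z \<noteq> 0
    \<Longrightarrow> {x\<in>space (PiM I (\<lambda>_. \<mu>)). f x = 0} \<in> null_sets (PiM I (\<lambda>_. \<mu>))"
  using \<open>finite I\<close>
proof (induction I arbitrary: f z rule: finite_induct)
  case empty
  have e: "{x\<in>space (PiM {} (\<lambda>_. \<mu>)). f x = 0} = {}" using empty by (auto simp: space_PiM_empty)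
  show ?case by (subst e) simp
next
  case (insert i I)
  interpret product_sigma_finite "\<lambda>_. \<mu>" using sf by (simp add: product_sigma_finite_def)
  let ?M = "PiM (insert i I) (\<lambda>_. \<mu>)" and ?N = "PiM I (\<lambda>_. \<mu>)"
  have fm[measurable]: "f \<in> borel_measurable ?M" by fact
  define S where "S = {x\<in>space ?M. f x = 0}"
  have Ssets[measurable]: "S \<in> sets ?M" unfolding S_def by measurable
  define g where "g x = f (x(i := z i))" for x
  have upd: "(\<lambda>x. x(i := z i)) \<in> measurable ?N ?M"
    by (rule measurable_fun_upd[where J=I]) (auto simp: sp)
  have gm: "g \<in> borel_measurable ?N"
    unfolding g_def using measurable_comp[OF upd fm] by (simp add: o_def)
  have gp: "\<forall>x j. \<exists>p. \<forall>t. g (x(j:=t)) = poly p t"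
  proof (intro allI)
    fix x j
    show "\<exists>p. \<forall>t. g (x(j:=t)) = poly p t"
    proof (cases "j = i")
      case True
      then show ?thesis by (intro exI[of _ "[:g x:]"]) (simp add: g_def)
    next
      case False
      obtain p where "\<forall>t. f ((x(i := z i))(j:=t)) = poly p t" using insert.prems(2) by blast
      moreover have "\<And>t. x(j:=t, i:=z i) = x(i:=z i, j:=t)" using False by (rule fun_upd_twist)
      ultimately show ?thesis by (intro exI[of _ p]) (simp only: g_def, simp)
    qed
  qed
  have zs: "z \<in> (\<Pi>\<^sub>E j\<in>insert i I. UNIV)" using insert.prems(3) by (simp add: space_PiM sp)
  have zr: "(restrict z I)(i := z i) = z"
    using zs insert.hyps(2) by (auto simp: fun_eq_iff PiE_def extensional_def)
  have "restrict z I \<in> space ?N" by (simp add: space_PiM sp)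
  moreover have "g (restrict z I) \<noteq> 0" using zr insert.prems(4) by (simp add: g_def)
  ultimately have Nnull: "{x\<in>space ?N. g x = 0} \<in> null_sets ?N"
    using insert.IH[OF gm gp] by blast
  have inner: "(\<integral>\<^sup>+ y. indicator S (x(i := y)) \<partial>\<mu>) = 0"
    if x: "x \<in> space ?N" "g x \<noteq> 0" for x
  proof -
    obtain p where p: "\<forall>t. f (x(i:=t)) = poly p t" using insert.prems(2) by blast
    have "p \<noteq> 0" using p x(2) by (auto simp: g_def)
    then have "finite {y. poly p y = 0}" by (rule poly_roots_finite)
    then have R: "{y. poly p y = 0} \<in> null_sets \<mu>" by (rule fin_null)
    have "AE y in \<mu>. indicator S (x(i := y)) = (0::ennreal)"
      by (rule AE_I'[OF R]) (auto simp: S_def p split: split_indicator)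
    then have "(\<integral>\<^sup>+ y. indicator S (x(i := y)) \<partial>\<mu>) = (\<integral>\<^sup>+ y. 0 \<partial>\<mu>)"
      by (rule nn_integral_cong_AE)
    then show ?thesis by simp
  qed
  have "AE x in ?N. (\<integral>\<^sup>+ y. indicator S (x(i := y)) \<partial>\<mu>) = 0"
    by (rule AE_I'[OF Nnull]) (auto intro: inner)
  then have "(\<integral>\<^sup>+ x. (\<integral>\<^sup>+ y. indicator S (x(i := y)) \<partial>\<mu>) \<partial>?N) = (\<integral>\<^sup>+ x. 0 \<partial>?N)"
    by (rule nn_integral_cong_AE)
  moreover have "emeasure ?M S = (\<integral>\<^sup>+ x. (\<integral>\<^sup>+ y. indicator S (x(i := y)) \<partial>\<mu>) \<partial>?N)"
    using product_nn_integral_insert[OF insert.hyps(1,2), of "indicator S"] Ssets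
    by (simp add: nn_integral_indicator)
  ultimately have "emeasure ?M S = 0" by simp
  then show ?case using Ssets by (simp add: S_def null_sets_def)
qed

lemma construct:
  fixes W1 :: "real^'d^('d\<times>'r::finite)" and W2 :: "real^('d\<times>'r)^'r"
    and W3 :: "real^'r^('d\<times>'r)" and W4 :: "real^('d\<times>'r)^'d"
    and Gs Ws :: "real^'d^'d" and bs :: "real^'d"
  assumes d1: "det ((\<chi> k p. W2 $ snd p $ k * W1 $ k $ fst p) :: real^('d\<times>'r)^('d\<times>'r)) \<noteq> 0"
    and d2: "det ((\<chi> k p. W4 $ fst p $ k * W3 $ k $ snd p) :: real^('d\<times>'r)^('d\<times>'r)) \<noteq> 0"
    and rk: "rank Ws = CARD('r)"
  shows "\<exists>(G1 :: real^('d\<times>'r)^('d\<times>'r)) (G2 :: real^'r^'r) (G3 :: real^('d\<times>'r)^('d\<times>'r)) (G4 :: real^'d^'d)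
       (b1 :: real^('d\<times>'r)) (b2 :: real^'r) (b3 :: real^('d\<times>'r)) (b4 :: real^'d).
       is_diag G1 \<and> is_diag G2 \<and> is_diag G3 \<and> is_diag G4 \<and>
       (\<forall>x :: real^'d. norm x \<le> 1 \<longrightarrow>
          layer G4 W4 b4 (layer G3 W3 b3 (layer G2 W2 b2 (layer G1 W1 b1 x)))
          = layer Gs Ws bs x)"
proof -
  obtain A :: "real^'r^'d" and B :: "real^'d^'r" where T: "Gs ** Ws = A ** B"
    using factor_rank[OF rk] by blast
  obtain g1 where g1: "W2 ** (diagm g1 ** W1) = B"
    using solve_diag[of W2 snd W1 fst, OF d1] by (metis snd_conv fst_conv)
  obtain g3 where g3: "W4 ** (diagm g3 ** W3) = A"
    using solve_diag[of W4 fst W3 snd, OF d2] by (metis snd_conv fst_conv)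
  define G1 where "G1 = diagm g1"
  define G3 where "G3 = diagm g3"
  define S0 :: "(real^'d) set" where "S0 = cball 0 1"
  obtain b1 where b1: "\<forall>x\<in>S0. \<forall>k. 0 \<le> ((G1 ** W1) *v x + b1) $ k"
    using bias_exists[of S0 "G1 ** W1"] unfolding S0_def by (meson bounded_cball)
  define S1 where "S1 = (\<lambda>x. (G1 ** W1) *v x + b1) ` S0"
  have bS1: "bounded S1" unfolding S1_def S0_def by (intro bounded_affine_image) simp
  obtain b2 where b2: "\<forall>x\<in>S1. \<forall>k. 0 \<le> ((mat 1 ** W2) *v x + b2) $ k"
    using bias_exists[OF bS1] by blast
  define S2 where "S2 = (\<lambda>x. (mat 1 ** W2) *v x + b2) ` S1"
  have bS2: "bounded S2" unfolding S2_def by (intro bounded_affine_image bS1)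
  obtain b3 where b3: "\<forall>x\<in>S2. \<forall>k. 0 \<le> ((G3 ** W3) *v x + b3) $ k"
    using bias_exists[OF bS2] by blast
  define b4 where "b4 = bs - (A *v (W2 *v b1 + b2) + W4 *v b3)"
  have main: "layer (mat 1) W4 b4 (layer G3 W3 b3 (layer (mat 1) W2 b2 (layer G1 W1 b1 x)))
          = layer Gs Ws bs x" if x: "norm x \<le> 1" for x
  proof -
    have x0: "x \<in> S0" using x by (simp add: S0_def)
    define y1 where "y1 = (G1 ** W1) *v x + b1"
    have l1: "layer G1 W1 b1 x = y1" using b1 x0 by (simp add: layer_def vrelu_nonneg y1_def)
    have y1S: "y1 \<in> S1" using x0 by (simp add: S1_def y1_def)
    define y2 where "y2 = (mat 1 ** W2) *v y1 + b2"
    have l2: "layer (mat 1) W2 b2 y1 = y2" using b2 y1S by (simp add: layer_def vrelu_nonneg y2_def)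
    have y2S: "y2 \<in> S2" using y1S by (simp add: S2_def y2_def)
    define y3 where "y3 = (G3 ** W3) *v y2 + b3"
    have l3: "layer G3 W3 b3 y2 = y3" using b3 y2S by (simp add: layer_def vrelu_nonneg y3_def)
    have "W4 *v y3 = A *v y2 + W4 *v b3"
      by (simp add: y3_def matrix_vector_right_distrib matrix_vector_mul_assoc G3_def g3)
    also have "A *v y2 = A *v (W2 *v ((G1 ** W1) *v x)) + A *v (W2 *v b1 + b2)"
      by (simp add: y2_def y1_def matrix_vector_right_distrib)
    also have "A *v (W2 *v ((G1 ** W1) *v x)) = (Gs ** Ws) *v x"
      by (simp add: matrix_vector_mul_assoc G1_def g1 T)
    finally have "(mat 1 ** W4) *v y3 + b4 = (Gs ** Ws) *v x + bs"
      by (simp add: b4_def algebra_simps)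
    then show ?thesis using l1 l2 l3 by (simp add: layer_def)
  qed
  show ?thesis
    apply (rule exI[of _ G1], rule exI[of _ "mat 1"], rule exI[of _ G3], rule exI[of _ "mat 1"])
    apply (rule exI[of _ b1], rule exI[of _ b2], rule exI[of _ b3], rule exI[of _ b4])
    using main is_diag_diagm[of g1] is_diag_diagm[of g3] is_diag_mat1 is_diag_mat1 by (simp add: G1_def G3_def)
qed


theorem mainTheorem2:
  fixes \<mu> :: "real measure"
    and Gs :: "real^'d^'d" and Ws :: "real^'d^'d" and bs :: "real^'d"
    and r_ty :: "'r::finite itself"
  assumes "CARD('d) \<ge> 2"
    and "CARD('r) < CARD('d)"
    and "is_diag Gs"
    and "rank Ws = CARD('r)"
    and "cont_bounded_distr \<mu>"
  shows "AE \<omega> in PiM (UNIV :: ('d,'r) widx set) (\<lambda>_. \<mu>).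
     \<exists>(G1 :: real^('d\<times>'r)^('d\<times>'r)) (G2 :: real^'r^'r) (G3 :: real^('d\<times>'r)^('d\<times>'r)) (G4 :: real^'d^'d)
       (b1 :: real^('d\<times>'r)) (b2 :: real^'r) (b3 :: real^('d\<times>'r)) (b4 :: real^'d).
       is_diag G1 \<and> is_diag G2 \<and> is_diag G3 \<and> is_diag G4 \<and>
       (\<forall>x :: real^'d. norm x \<le> 1 \<longrightarrow>
          layer G4 (W4 \<omega>) b4 (layer G3 (W3 \<omega>) b3 (layer G2 (W2 \<omega>) b2 (layer G1 (W1 \<omega>) b1 x)))
          = layer Gs Ws bs x)"
proof -
  let ?P = "PiM (UNIV :: ('d,'r) widx set) (\<lambda>_. \<mu>)"
  have ps: "prob_space \<mu>" and sb: "sets \<mu> = sets borel" and ac: "absolutely_continuous lborel \<mu>"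
    using assms(5) by (auto simp: cont_bounded_distr_def)
  have sf: "sigma_finite_measure \<mu>" using ps by (rule prob_space_imp_sigma_finite)
  have sp: "space \<mu> = UNIV" using sets_eq_imp_space_eq[OF sb] by simp
  have fin_null: "R \<in> null_sets \<mu>" if "finite R" for R
  proof -
    have "R \<in> null_sets lborel" using that by (intro countable_imp_null_set_lborel countable_finite)
    then show ?thesis using ac by (auto simp: absolutely_continuous_def)
  qed
  have comp[measurable]: "(\<lambda>w. w e) \<in> borel_measurable ?P" for e
  proof -
    have "(\<lambda>w. w e) \<in> measurable ?P \<mu>" by (rule measurable_component_singleton) simp
    then show ?thesis using measurable_cong_sets[OF refl sb, of ?P] by simp
  qed
  define F where "F w = det ((\<chi> k p. w (Inr (Inl (snd p, k))) * w (Inl (k, fst p))) :: real^('d\<times>'r)^('d\<times>'r))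
     * det ((\<chi> k p. w (Inr (Inr (Inr (fst p, k)))) * w (Inr (Inr (Inl (k, snd p))))) :: real^('d\<times>'r)^('d\<times>'r))"
    for w :: "('d,'r) widx \<Rightarrow> real"
  have Fe: "F = (\<lambda>w. (\<Sum>p\<in>{p. p permutes UNIV}. of_int (sign p) *
        (\<Prod>i\<in>UNIV. w (Inr (Inl (snd (p i), i))) * w (Inl (i, fst (p i)))))
      * (\<Sum>p\<in>{p. p permutes UNIV}. of_int (sign p) *
        (\<Prod>i\<in>UNIV. w (Inr (Inr (Inr (fst (p i), i)))) * w (Inr (Inr (Inl (i, snd (p i))))))))"
    by (simp add: fun_eq_iff F_def det_def)
  have Fm: "F \<in> borel_measurable ?P" unfolding Fe by measurable
  have Fp: "\<forall>x j. \<exists>p. \<forall>t. F (x(j:=t)) = poly p t"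
  proof (intro allI)
    fix x :: "('d,'r) widx \<Rightarrow> real" and j
    obtain P1 where P1: "\<forall>t. det ((\<chi> k p. (x(j:=t)) (Inr (Inl (snd p, k))) * (x(j:=t)) (Inl (k, fst p))) :: real^('d\<times>'r)^('d\<times>'r)) = poly P1 t"
      using det_upd_poly[where w=x and e=j and a="\<lambda>k p. Inr (Inl (snd p, k))" and b="\<lambda>k p. Inl (k, fst p)"] by blast
    obtain P2 where P2: "\<forall>t. det ((\<chi> k p. (x(j:=t)) (Inr (Inr (Inr (fst p, k)))) * (x(j:=t)) (Inr (Inr (Inl (k, snd p))))) :: real^('d\<times>'r)^('d\<times>'r)) = poly P2 t"
      using det_upd_poly[where w=x and e=j and a="\<lambda>k p. Inr (Inr (Inr (fst p, k)))" and b="\<lambda>k p. Inr (Inr (Inl (k, snd p)))"] by blast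
    show "\<exists>p. \<forall>t. F (x(j:=t)) = poly p t"
      by (intro exI[of _ "P1 * P2"] allI) (simp only: F_def P1[rule_format] P2[rule_format] poly_mult)
  qed
  define z :: "('d,'r) widx \<Rightarrow> real" where
    "z = case_sum (\<lambda>(k,b). if b = fst k then 1 else 0)
          (case_sum (\<lambda>(a,k). if a = snd k then 1 else 0)
            (case_sum (\<lambda>(k,j). if j = snd k then 1 else 0) (\<lambda>(i,k). if i = fst k then 1 else 0)))"
  have z1: "((\<chi> k p. z (Inr (Inl (snd p, k))) * z (Inl (k, fst p))) :: real^('d\<times>'r)^('d\<times>'r)) = mat 1"
    by (auto simp: vec_eq_iff mat_def z_def prod_eq_iff)
  have z2: "((\<chi> k p. z (Inr (Inr (Inr (fst p, k)))) * z (Inr (Inr (Inl (k, snd p))))) :: real^('d\<times>'r)^('d\<times>'r)) = mat 1"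
    by (auto simp: vec_eq_iff mat_def z_def prod_eq_iff)
  have Fz: "F z \<noteq> 0" by (simp add: F_def z1 z2)
  have zsp: "z \<in> space ?P" by (simp add: space_PiM sp)
  have Nnull: "{x\<in>space ?P. F x = 0} \<in> null_sets ?P"
    using null_poly[OF sf sp fin_null finite Fm Fp zsp Fz] .
  show ?thesis
  proof (rule AE_I'[OF Nnull], safe)
    fix w assume "w \<in> space ?P"
    assume nP: "\<not> (\<exists>(G1 :: real^('d\<times>'r)^('d\<times>'r)) (G2 :: real^'r^'r) (G3 :: real^('d\<times>'r)^('d\<times>'r)) (G4 :: real^'d^'d)
       (b1 :: real^('d\<times>'r)) (b2 :: real^'r) (b3 :: real^('d\<times>'r)) (b4 :: real^'d).
       is_diag G1 \<and> is_diag G2 \<and> is_diag G3 \<and> is_diag G4 \<and>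
       (\<forall>x :: real^'d. norm x \<le> 1 \<longrightarrow>
          layer G4 (W4 w) b4 (layer G3 (W3 w) b3 (layer G2 (W2 w) b2 (layer G1 (W1 w) b1 x)))
          = layer Gs Ws bs x))"
    show "F w = 0"
    proof (rule ccontr)
      assume "F w \<noteq> 0"
      then have d1: "det ((\<chi> k p. W2 w $ snd p $ k * W1 w $ k $ fst p) :: real^('d\<times>'r)^('d\<times>'r)) \<noteq> 0"
        and d2: "det ((\<chi> k p. W4 w $ fst p $ k * W3 w $ k $ snd p) :: real^('d\<times>'r)^('d\<times>'r)) \<noteq> 0"
        by (simp_all add: F_def W1_def W2_def W3_def W4_def)
      show False using construct[OF d1 d2 assms(4), of Gs bs] nP by blast
    qed
  qed
qed

end
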